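(* Let $p$ be a prime, $a_1,a_2,a_3\in\mathbb{F}_p$, $s=3+a_1+a_2+a_3$, and let $x\in\mathbb{F}_p^3$ be a solution of \[ x_1^2+x_2^2+x_3^2+a_1x_2x_3+a_2x_1x_3+a_3x_1x_2 = s\,x_1x_2x_3. \] For $k=1,2,3$ let $m_k$ replace $x_k$ by $-x_k + s x_{k-1}x_{k+1} - a_{k+1}x_{k-1} - a_{k-1}x_{k+1}$ (indices modulo $3$), leaving the other coordinates unchanged. If, for some index $i$, $m_{i-1}x = m_{i+1}x = x$, then \[ x_i^2\,(u^2-4)\,(u^2 + a_{i-1}a_{i+1}u + a_{i-1}^2 + a_{i+1}^2 - 4) = 0, \] where $u = s x_i - a_i$. *)

theory Defs
  imports "HOL-Number_Theory.Number_Theory"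
begin

(* Coordinates of F_p^3 are modelled as integers modulo p; indices are 0,1,2
   (paper: 1,2,3), with arithmetic on indices modulo 3. *)

definition nxt :: "nat \<Rightarrow> nat" where "nxt i = (i + 1) mod 3"
definition prv :: "nat \<Rightarrow> nat" where "prv i = (i + 2) mod 3"

definition sval :: "(nat \<Rightarrow> int) \<Rightarrow> int" where
  "sval a = 3 + a 0 + a 1 + a 2"

definition markov_eq :: "int \<Rightarrow> (nat \<Rightarrow> int) \<Rightarrow> (nat \<Rightarrow> int) \<Rightarrow> bool" where
  "markov_eq p a x \<longleftrightarrow>
     [x 0 ^ 2 + x 1 ^ 2 + x 2 ^ 2 + a 0 * x 1 * x 2 + a 1 * x 0 * x 2 + a 2 * x 0 * x 1
       = sval a * x 0 * x 1 * x 2] (mod p)"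

definition mmove :: "(nat \<Rightarrow> int) \<Rightarrow> nat \<Rightarrow> (nat \<Rightarrow> int) \<Rightarrow> (nat \<Rightarrow> int)" where
  "mmove a k x = x(k := - x k + sval a * x (prv k) * x (nxt k)
                         - a (nxt k) * x (prv k) - a (prv k) * x (nxt k))"

definition eqmod3 :: "int \<Rightarrow> (nat \<Rightarrow> int) \<Rightarrow> (nat \<Rightarrow> int) \<Rightarrow> bool" where
  "eqmod3 p x y \<longleftrightarrow> (\<forall>j<3. [x j = y j] (mod p))"

end

theory Submission
  imports Defs
begin

lemma p2_case:
  fixes X Y Z A B C S :: int
  assumes "even (X^2+Y^2+Z^2+A*Y*Z+B*X*Z+C*X*Y-S*X*Y*Z)"
    "even (2*Y-(S*X-A)*Z+C*X)" "even (2*Z-(S*X-A)*Y+B*X)"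
  shows "even (X^2*((S*X-A)^2-4)*((S*X-A)^2+C*B*(S*X-A)+C^2+B^2-4))"
  using assms
  by (cases "even X"; cases "even Y"; cases "even Z"; cases "even A"; cases "even B";
      cases "even C"; cases "even S"; simp add: even_mult_iff)

lemma ident:
  fixes X Y Z B C u :: int
  shows "2*(X^2*(u^2-4)*(u^2+C*B*u+C^2+B^2-4)) =
   (u^2-4)*(X*B*(2*(2*Z-u*Y+B*X)+u*(2*Y-u*Z+C*X)) + X*C*(2*(2*Y-u*Z+C*X)+u*(2*Z-u*Y+B*X))
   - (4-u^2)*(2*(X^2+Y^2+Z^2-u*Y*Z+B*X*Z+C*X*Y) - Y*(2*Y-u*Z+C*X) - Z*(2*Z-u*Y+B*X)))"
  by (simp add: algebra_simps power2_eq_square)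

lemma core:
  fixes p X Y Z A B C S :: int
  assumes p: "prime p"
    and he: "p dvd (X^2+Y^2+Z^2+A*Y*Z+B*X*Z+C*X*Y-S*X*Y*Z)"
    and h1: "p dvd (2*Y-(S*X-A)*Z+C*X)" and h2: "p dvd (2*Z-(S*X-A)*Y+B*X)"
  shows "p dvd (X^2*((S*X-A)^2-4)*((S*X-A)^2+C*B*(S*X-A)+C^2+B^2-4))"
proof (cases "p = 2")
  case True
  then show ?thesis using p2_case[of X Y Z A B C S] he h1 h2 by simp
next
  case False
  define u where "u = S*X-A"
  have e': "X^2+Y^2+Z^2-u*Y*Z+B*X*Z+C*X*Y = X^2+Y^2+Z^2+A*Y*Z+B*X*Z+C*X*Y-S*X*Y*Z"
    unfolding u_def by (simp add: algebra_simps)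
  have "p dvd 2*(X^2*(u^2-4)*(u^2+C*B*u+C^2+B^2-4))"
  proof -
    have l1: "p dvd (2*Y-u*Z+C*X)" and l2: "p dvd (2*Z-u*Y+B*X)" using h1 h2 u_def by simp_all
    have ee: "p dvd (X^2+Y^2+Z^2-u*Y*Z+B*X*Z+C*X*Y)" using he by (simp only: e')
    have t1: "p dvd X*B*(2*(2*Z-u*Y+B*X)+u*(2*Y-u*Z+C*X))"
      by (rule dvd_mult[OF dvd_add[OF dvd_mult[OF l2] dvd_mult[OF l1]]])
    have t2: "p dvd X*C*(2*(2*Y-u*Z+C*X)+u*(2*Z-u*Y+B*X))"
      by (rule dvd_mult[OF dvd_add[OF dvd_mult[OF l1] dvd_mult[OF l2]]])
    have t3: "p dvd (4-u^2)*(2*(X^2+Y^2+Z^2-u*Y*Z+B*X*Z+C*X*Y) - Y*(2*Y-u*Z+C*X) - Z*(2*Z-u*Y+B*X))"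
      by (rule dvd_mult[OF dvd_diff[OF dvd_diff[OF dvd_mult[OF ee] dvd_mult[OF l1]] dvd_mult[OF l2]]])
    show ?thesis by (subst ident[where X=X and Y=Y and Z=Z and B=B and C=C and u=u]) (rule dvd_mult[OF dvd_diff[OF dvd_add[OF t1 t2] t3]])
  qed
  then have "p dvd 2 \<or> p dvd (X^2*(u^2-4)*(u^2+C*B*u+C^2+B^2-4))"
    using p prime_dvd_mult_iff by blast
  moreover have "\<not> p dvd 2"
  proof
    assume "p dvd 2"
    then have "p \<le> 2" by (simp add: zdvd_imp_le)
    moreover have "p \<ge> 2" using p prime_ge_2_int by blast
    ultimately show False using False by simp
  qed
  ultimately show ?thesis unfolding u_def by blast
qed

theorem proposition2p4:
  fixes p :: int and a x :: "nat \<Rightarrow> int" and i :: nat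
  assumes "prime p"
    and "markov_eq p a x"
    and "i < 3"
    and "eqmod3 p (mmove a (prv i) x) x"
    and "eqmod3 p (mmove a (nxt i) x) x"
  shows "[x i ^ 2 * ((sval a * x i - a i) ^ 2 - 4)
          * ((sval a * x i - a i) ^ 2 + a (prv i) * a (nxt i) * (sval a * x i - a i)
             + a (prv i) ^ 2 + a (nxt i) ^ 2 - 4) = 0] (mod p)"
proof -
  have E: "p dvd (x 0 ^ 2 + x 1 ^ 2 + x 2 ^ 2 + a 0 * x 1 * x 2 + a 1 * x 0 * x 2 + a 2 * x 0 * x 1
       - sval a * x 0 * x 1 * x 2)"
    using assms(2) unfolding markov_eq_def by (simp add: cong_iff_dvd_diff)
  have M: "\<And>k. k < 3 \<Longrightarrow> eqmod3 p (mmove a k x) x \<Longrightarrow>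
      p dvd (2 * x k - sval a * x (prv k) * x (nxt k) + a (nxt k) * x (prv k) + a (prv k) * x (nxt k))"
  proof -
    fix k assume k: "k < 3" and h: "eqmod3 p (mmove a k x) x"
    then have "[mmove a k x k = x k] (mod p)" unfolding eqmod3_def by blast
    then have "p dvd (mmove a k x k - x k)" by (simp add: cong_iff_dvd_diff)
    then have "p dvd - (mmove a k x k - x k)" by (simp only: dvd_minus_iff)
    moreover have "- (mmove a k x k - x k) = 2 * x k - sval a * x (prv k) * x (nxt k) + a (nxt k) * x (prv k) + a (prv k) * x (nxt k)"
      unfolding mmove_def by simp
    ultimately show "p dvd (2 * x k - sval a * x (prv k) * x (nxt k) + a (nxt k) * x (prv k) + a (prv k) * x (nxt k))" by metis
  qed
  have Mp: "p dvd (2 * x (prv i) - sval a * x (prv (prv i)) * x (nxt (prv i)) + a (nxt (prv i)) * x (prv (prv i)) + a (prv (prv i)) * x (nxt (prv i)))"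
    using M[OF _ assms(4)] assms(3) by (simp add: prv_def)
  have Mn: "p dvd (2 * x (nxt i) - sval a * x (prv (nxt i)) * x (nxt (nxt i)) + a (nxt (nxt i)) * x (prv (nxt i)) + a (prv (nxt i)) * x (nxt (nxt i)))"
    using M[OF _ assms(5)] assms(3) by (simp add: nxt_def)
  have pn: "prv 0 = 2" "prv 1 = 0" "prv 2 = 1" "nxt 0 = 1" "nxt 1 = 2" "nxt 2 = 0" "prv (Suc 0) = 0" "nxt (Suc 0) = 2"
    by (simp_all add: prv_def nxt_def)
  have "i = 0 \<or> i = 1 \<or> i = 2" using assms(3) by auto
  then have "p dvd (x i ^ 2 * ((sval a * x i - a i) ^ 2 - 4)
          * ((sval a * x i - a i) ^ 2 + a (prv i) * a (nxt i) * (sval a * x i - a i)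
             + a (prv i) ^ 2 + a (nxt i) ^ 2 - 4))"
  proof (elim disjE)
    assume hi: "i = 0"
    have "p dvd (x 0^2 * ((sval a * x 0 - a 0)^2 - 4) * ((sval a * x 0 - a 0)^2 + a 2 * a 1 * (sval a * x 0 - a 0) + a 2^2 + a 1^2 - 4))"
      by (rule core[OF assms(1), of "x 0" "x 1" "x 2" "a 0" "a 1" "a 2"]) (use E Mp Mn hi in \<open>simp_all add: pn algebra_simps\<close>)
    then show ?thesis using hi by (simp add: pn)
  next
    assume hi: "i = 1"
    have "p dvd (x 1^2 * ((sval a * x 1 - a 1)^2 - 4) * ((sval a * x 1 - a 1)^2 + a 0 * a 2 * (sval a * x 1 - a 1) + a 0^2 + a 2^2 - 4))"
      by (rule core[OF assms(1), of "x 1" "x 2" "x 0" "a 1" "a 2" "a 0"]) (use E Mp Mn hi in \<open>simp_all add: pn algebra_simps\<close>)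
    then show ?thesis using hi by (simp add: pn)
  next
    assume hi: "i = 2"
    have "p dvd (x 2^2 * ((sval a * x 2 - a 2)^2 - 4) * ((sval a * x 2 - a 2)^2 + a 1 * a 0 * (sval a * x 2 - a 2) + a 1^2 + a 0^2 - 4))"
      by (rule core[OF assms(1), of "x 2" "x 0" "x 1" "a 2" "a 0" "a 1"]) (use E Mp Mn hi in \<open>simp_all add: pn algebra_simps\<close>)
    then show ?thesis using hi by (simp add: pn)
  qed
  then show ?thesis by (simp add: cong_0_iff)
qed

end
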